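(* Let $K\ge 2$, $N\ge 2K$ (allowing $N=\infty$), let $B$ be a fully simplified parameter set of size $K$, let $x$ be a causal sequence with $x[0]\neq0$ and $y=h[\cdot;B]*x$. Let $d(\cdot,\cdot)\ge 0$ be any function on pairs of length-$N$ vectors with $d(a,b)=0$ iff $a=b$, and define on ordered parameter vectors $\tilde B^{\mathrm{ord}}=((\tilde b_k,\tilde\beta_k))_{k=1}^K\in\mathbb{C}^{2K}$ the objective $\mathcal{L}(\tilde B^{\mathrm{ord}})=d\big((y[n])_{0\le n<N},((h[\cdot;\tilde B^{\mathrm{ord}}]*x)[n])_{0\le n<N}\big)$. Then for any ordering $B^{\mathrm{ord}}$ of $B$ and any non-identity permutation $\sigma$ of $\{1,\dots,K\}$, $\mathcal{L}(B^{\mathrm{ord}})=\mathcal{L}(\sigma(B^{\mathrm{ord}}))=0$ while $\mathcal{L}(\lambda B^{\mathrm{ord}}+(1-\lambda)\sigma(B^{\mathrm{ord}}))>0$ for every $0<\lambda<1$. In particular $\mathcal{L}$ is not convex on $\mathbb{C}^{2K}\cong\mathbb{R}^{4K}$.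
   Context: A parameter set is an unordered finite set $B=\{(b_k,\beta_k)\}_{k=1}^K$ with $b_k,\beta_k\in\mathbb{C}$; it is fully simplified if the poles are pairwise distinct and all coefficients are nonzero. For a list of pairs $((c_k,\gamma_k))_k$ the causal impulse response is $h[n]=\sum_k c_k\gamma_k^n$ for $n\ge0$, $0$ for $n<0$ ($0^0=1$). For an ordered vector $B^{\mathrm{ord}}=((b_k,\beta_k))_k$, $\sigma(B^{\mathrm{ord}})=((b_{\sigma(k)},\beta_{\sigma(k)}))_k$, and convex combinations are taken componentwise. Causal sequences vanish at negative indices and $(h*x)[n]=\sum_m h[m]x[n-m]$. *)

theory Defs
  imports "HOL-Analysis.Analysis" "HOL-Library.Extended_Nat"
begin

text \<open>Sequences are indexed by nat; causal sequences are identified with their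
restriction to nonnegative indices (they vanish at negative indices).\<close>

definition h_set :: "(complex \<times> complex) set \<Rightarrow> nat \<Rightarrow> complex" where
  "h_set B n = (\<Sum>p\<in>B. fst p * snd p ^ n)"

definition h_list :: "(complex \<times> complex) list \<Rightarrow> nat \<Rightarrow> complex" where
  "h_list L n = (\<Sum>p\<leftarrow>L. fst p * snd p ^ n)"

definition conv :: "(nat \<Rightarrow> complex) \<Rightarrow> (nat \<Rightarrow> complex) \<Rightarrow> nat \<Rightarrow> complex" where
  "conv h x n = (\<Sum>m\<le>n. h m * x (n - m))"

text \<open>Truncation to the first N samples (N = \<infinity> allowed): a length-N vector is a
sequence vanishing at indices n with n \<ge> N.\<close>
definition trunc :: "enat \<Rightarrow> (nat \<Rightarrow> complex) \<Rightarrow> nat \<Rightarrow> complex" where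
  "trunc N a n = (if enat n < N then a n else 0)"

definition vecs :: "enat \<Rightarrow> (nat \<Rightarrow> complex) set" where
  "vecs N = {a. \<forall>n. \<not> enat n < N \<longrightarrow> a n = 0}"

definition fully_simplified :: "(complex \<times> complex) set \<Rightarrow> bool" where
  "fully_simplified B \<longleftrightarrow> finite B \<and> inj_on snd B \<and> (\<forall>p\<in>B. fst p \<noteq> 0)"

definition objective ::
  "((nat \<Rightarrow> complex) \<Rightarrow> (nat \<Rightarrow> complex) \<Rightarrow> real) \<Rightarrow> enat \<Rightarrow> (nat \<Rightarrow> complex)
    \<Rightarrow> (nat \<Rightarrow> complex) \<Rightarrow> (complex \<times> complex) list \<Rightarrow> real" where
  "objective d N y x Bt = d (trunc N y) (trunc N (conv (h_list Bt) x))"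

text \<open>Permutation action on ordered vectors (indices 0..K-1).\<close>
definition perm_ord :: "(nat \<Rightarrow> nat) \<Rightarrow> (complex \<times> complex) list \<Rightarrow> (complex \<times> complex) list" where
  "perm_ord \<sigma> L = map (\<lambda>k. L ! \<sigma> k) [0..<length L]"

definition cvx :: "real \<Rightarrow> (complex \<times> complex) list \<Rightarrow> (complex \<times> complex) list \<Rightarrow> (complex \<times> complex) list" where
  "cvx l U V = map2 (\<lambda>u v. (of_real l * fst u + of_real (1 - l) * fst v,
                           of_real l * snd u + of_real (1 - l) * snd v)) U V"

end

theory Submission imports Defs begin

lemma vander_zero:
  fixes S :: "complex set"
  assumes "finite S"
  shows "\<And>M a. card S \<le> M \<Longrightarrow> (\<forall>n<M. (\<Sum>s\<in>S. a s * s ^ n) = 0) \<Longrightarrow> \<forall>s\<in>S. a s = 0"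
  using assms
proof (induction S rule: finite_induct)
  case empty
  then show ?case by simp
next
  case (insert s0 T M a)
  from insert.prems(1) insert.hyps obtain M' where M: "M = Suc M'" "card T \<le> M'"
    by (cases M) auto
  have "\<forall>n<M'. (\<Sum>s\<in>T. (a s * (s - s0)) * s ^ n) = 0"
  proof (intro allI impI)
    fix n assume n: "n < M'"
    have e1: "(\<Sum>s\<in>insert s0 T. a s * s ^ Suc n) = 0" using insert.prems(2) n M by auto
    have e0: "(\<Sum>s\<in>insert s0 T. a s * s ^ n) = 0" using insert.prems(2) n M by auto
    have "(\<Sum>s\<in>T. (a s * (s - s0)) * s ^ n) =
        (\<Sum>s\<in>insert s0 T. a s * s ^ Suc n) - s0 * (\<Sum>s\<in>insert s0 T. a s * s ^ n)"
      using insert.hyps by (simp add: sum_distrib_left sum_subtractf[symmetric] algebra_simps)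
    then show "(\<Sum>s\<in>T. (a s * (s - s0)) * s ^ n) = 0" using e0 e1 by simp
  qed
  from insert.IH[OF M(2) this] have T0: "\<forall>s\<in>T. a s = 0"
    using insert.hyps by auto
  have "(\<Sum>s\<in>insert s0 T. a s * s ^ 0) = 0" using insert.prems(2) M by auto
  then have "a s0 = 0" using insert.hyps T0 by simp
  then show ?case using T0 by auto
qed

lemma deconv:
  assumes "x 0 \<noteq> 0" and "\<forall>n<M. conv h1 x n = conv h2 x n"
  shows "\<forall>n<M. h1 n = (h2 n :: complex)"
proof (intro allI impI)
  fix n show "n < M \<Longrightarrow> h1 n = h2 n"
  proof (induction n rule: less_induct)
    case (less n)
    have c: "conv h x n = h n * x 0 + (\<Sum>m<n. h m * x (n - m))" for h
      unfolding conv_def lessThan_Suc_atMost[symmetric] by simp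
    have "(\<Sum>m<n. h1 m * x (n - m)) = (\<Sum>m<n. h2 m * x (n - m))"
      using less by (intro sum.cong) auto
    moreover have "conv h1 x n = conv h2 x n" using assms(2) less.prems by simp
    ultimately have "h1 n * x 0 = h2 n * x 0" unfolding c by simp
    then show ?case using assms(1) by (metis mult_right_cancel)
  qed
qed

lemma hlist_nth: "h_list L n = (\<Sum>k<length L. fst (L!k) * snd (L!k) ^ n)"
  unfolding h_list_def by (simp add: sum_list_sum_nth atLeast0LessThan)

lemma sqineq:
  fixes u v :: complex and l :: real
  defines "g \<equiv> \<lambda>z::complex. Re z ^ 2 + Im z ^ 2"
  shows "g (of_real l * u + of_real (1 - l) * v) = l * g u + (1 - l) * g v - l * (1 - l) * g (u - v)"
  unfolding g_def by (simp add: algebra_simps power2_eq_square)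

lemma key:
  fixes b c \<beta> :: "nat \<Rightarrow> complex" and l :: real and K :: nat
  assumes inj: "inj_on \<beta> {..<K}" and bnz: "\<forall>k<K. b k \<noteq> 0"
    and perm: "\<sigma> permutes {..<K}" and sid: "\<sigma> \<noteq> id" and l: "0 < l" "l < 1"
    and eq: "\<forall>n<2*K. (\<Sum>k<K. b k * \<beta> k ^ n) =
       (\<Sum>k<K. c k * (of_real l * \<beta> k + of_real (1 - l) * \<beta> (\<sigma> k)) ^ n)"
  shows False
proof -
  define \<gamma> where "\<gamma> k = of_real l * \<beta> k + of_real (1 - l) * \<beta> (\<sigma> k)" for k
  define S where "S = \<beta> ` {..<K} \<union> \<gamma> ` {..<K}"
  define a where "a s = (\<Sum>k\<in>{k\<in>{..<K}. \<beta> k = s}. b k) - (\<Sum>k\<in>{k\<in>{..<K}. \<gamma> k = s}. c k)" for s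
  have finS: "finite S" unfolding S_def by simp
  have cardS: "card S \<le> 2 * K" unfolding S_def
    by (rule order.trans[OF card_Un_le]) (use card_image_le[of "{..<K}" \<beta>] card_image_le[of "{..<K}" \<gamma>] in auto)
  have grp: "(\<Sum>s\<in>S. (\<Sum>k\<in>{k\<in>{..<K}. f k = s}. e k) * s ^ n) = (\<Sum>k<K. e k * f k ^ n)"
    if "f ` {..<K} \<subseteq> S" for f e and n :: nat
  proof -
    have "(\<Sum>s\<in>S. (\<Sum>k\<in>{k\<in>{..<K}. f k = s}. e k) * s ^ n)
        = (\<Sum>s\<in>S. (\<Sum>k\<in>{k\<in>{..<K}. f k = s}. e k * f k ^ n))"
      by (intro sum.cong refl) (simp add: sum_distrib_right)
    also have "\<dots> = (\<Sum>k<K. e k * f k ^ n)"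
      by (rule sum.group) (use finS that in auto)
    finally show ?thesis .
  qed
  have "\<forall>n<2*K. (\<Sum>s\<in>S. a s * s ^ n) = 0"
  proof (intro allI impI)
    fix n :: nat assume n: "n < 2 * K"
    have "(\<Sum>s\<in>S. a s * s ^ n) = (\<Sum>k<K. b k * \<beta> k ^ n) - (\<Sum>k<K. c k * \<gamma> k ^ n)"
      unfolding a_def left_diff_distrib sum_subtractf
      by (subst grp, simp add: S_def, subst grp, simp add: S_def, rule refl)
    then show "(\<Sum>s\<in>S. a s * s ^ n) = 0" using eq n unfolding \<gamma>_def by simp
  qed
  from vander_zero[OF finS cardS this] have a0: "\<forall>s\<in>S. a s = 0" .
  have sub: "\<beta> ` {..<K} \<subseteq> \<gamma> ` {..<K}"
  proof
    fix s assume "s \<in> \<beta> ` {..<K}"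
    then obtain j where j: "j < K" "s = \<beta> j" by auto
    have "{k\<in>{..<K}. \<beta> k = \<beta> j} = {j}" using inj j by (auto dest: inj_onD)
    moreover have "a s = 0" using a0 j unfolding S_def by auto
    ultimately have "b j = (\<Sum>k\<in>{k\<in>{..<K}. \<gamma> k = s}. c k)" unfolding a_def using j by simp
    then have "{k\<in>{..<K}. \<gamma> k = s} \<noteq> {}" using bnz j by (metis sum.empty)
    then show "s \<in> \<gamma> ` {..<K}" by auto
  qed
  have cb: "card (\<beta> ` {..<K}) = K" using card_image[OF inj] by simp
  have "card (\<gamma> ` {..<K}) \<le> K" using card_image_le[of "{..<K}" \<gamma>] by simp
  then have seq: "\<beta> ` {..<K} = \<gamma> ` {..<K}" using card_seteq[OF _ sub] cb by simp
  have injg: "inj_on \<gamma> {..<K}" using seq cb by (intro eq_card_imp_inj_on) auto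
  define g where "g z = Re z ^ 2 + Im z ^ 2" for z :: complex
  have "(\<Sum>k<K. g (\<gamma> k)) = (\<Sum>s\<in>\<gamma> ` {..<K}. g s)" using sum.reindex[OF injg, of g] by (simp add: comp_def)
  also have "\<dots> = (\<Sum>k<K. g (\<beta> k))" using sum.reindex[OF inj, of g] seq by (simp add: comp_def)
  finally have E1: "(\<Sum>k<K. g (\<gamma> k)) = (\<Sum>k<K. g (\<beta> k))" .
  have gid: "g (\<gamma> k) = l * g (\<beta> k) + (1 - l) * g (\<beta> (\<sigma> k)) - l * (1 - l) * g (\<beta> k - \<beta> (\<sigma> k))" for k
    unfolding g_def \<gamma>_def by (simp add: algebra_simps power2_eq_square)
  have ps: "(\<Sum>k<K. g (\<beta> (\<sigma> k))) = (\<Sum>k<K. g (\<beta> k))"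
    using sum.permute[OF perm, of "\<lambda>k. g (\<beta> k)"] by (simp add: comp_def)
  have "(\<Sum>k<K. g (\<gamma> k)) = (\<Sum>k<K. g (\<beta> k)) - l * (1 - l) * (\<Sum>k<K. g (\<beta> k - \<beta> (\<sigma> k)))"
    unfolding gid sum_subtractf sum.distrib sum_distrib_left[symmetric] ps by (simp add: algebra_simps)
  with E1 l have Z: "(\<Sum>k<K. g (\<beta> k - \<beta> (\<sigma> k))) = 0" by simp
  obtain k where k: "k < K" "\<sigma> k \<noteq> k"
  proof -
    have "\<exists>k<K. \<sigma> k \<noteq> k"
    proof (rule ccontr)
      assume "\<not> ?thesis"
      then have "\<sigma> x = x" for x using perm unfolding permutes_def by (cases "x < K") auto
      then show False using sid by auto
    qed
    then show ?thesis using that by blast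
  qed
  have gnn: "g z \<ge> 0" for z unfolding g_def by simp
  have sk: "\<sigma> k < K" using permutes_in_image[OF perm, of k] k by simp
  have "\<beta> k \<noteq> \<beta> (\<sigma> k)"
  proof
    assume "\<beta> k = \<beta> (\<sigma> k)"
    then have "k = \<sigma> k" using inj_onD[OF inj] k sk by simp
    then show False using k by simp
  qed
  then have gpos: "g (\<beta> k - \<beta> (\<sigma> k)) > 0" unfolding g_def
  proof -
    let ?z = "\<beta> k - \<beta> (\<sigma> k)"
    have "?z \<noteq> 0" using \<open>\<beta> k \<noteq> \<beta> (\<sigma> k)\<close> by simp
    then have "Re ?z \<noteq> 0 \<or> Im ?z \<noteq> 0" using complex_eq_iff[of ?z 0] by simp
    then show "Re ?z ^ 2 + Im ?z ^ 2 > 0"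
      by (metis add_nonneg_pos add_pos_nonneg zero_le_power2 zero_less_power2)
  qed
  have "(\<Sum>k<K. g (\<beta> k - \<beta> (\<sigma> k))) > 0"
    by (rule sum_pos2[of _ k]) (use k gpos gnn in auto)
  with Z show False by simp
qed

theorem mainTheorem7:
  fixes K :: nat and N :: enat and B :: "(complex \<times> complex) set"
    and x :: "nat \<Rightarrow> complex" and y :: "nat \<Rightarrow> complex"
    and d :: "(nat \<Rightarrow> complex) \<Rightarrow> (nat \<Rightarrow> complex) \<Rightarrow> real"
    and Bord :: "(complex \<times> complex) list" and \<sigma> :: "nat \<Rightarrow> nat"
  assumes "K \<ge> 2" and "enat (2 * K) \<le> N"
    and "fully_simplified B" and "card B = K"
    and "x 0 \<noteq> 0" and "y = conv (h_set B) x"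
    and "\<forall>a\<in>vecs N. \<forall>b\<in>vecs N. d a b \<ge> 0"
    and "\<forall>a\<in>vecs N. \<forall>b\<in>vecs N. d a b = 0 \<longleftrightarrow> a = b"
    and "distinct Bord" and "set Bord = B"
    and "\<sigma> permutes {..<K}" and "\<sigma> \<noteq> id"
  shows "objective d N y x Bord = 0 \<and> objective d N y x (perm_ord \<sigma> Bord) = 0
      \<and> (\<forall>l::real. 0 < l \<and> l < 1 \<longrightarrow>
            objective d N y x (cvx l Bord (perm_ord \<sigma> Bord)) > 0)
      \<and> \<not> (\<forall>U V (l::real). length U = K \<and> length V = K \<and> 0 \<le> l \<and> l \<le> 1 \<longrightarrow>
            objective d N y x (cvx l U V)
              \<le> l * objective d N y x U + (1 - l) * objective d N y x V)"
proof -
  note A = assms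
  have len: "length Bord = K" using A(4,9,10) distinct_card by metis
  define b where "b k = fst (Bord ! k)" for k
  define \<beta> where "\<beta> k = snd (Bord ! k)" for k
  define P where "P = perm_ord \<sigma> Bord"
  have fs: "finite B" "inj_on snd B" "\<forall>p\<in>B. fst p \<noteq> 0" using A(3) unfolding fully_simplified_def by auto
  have mem: "Bord ! k \<in> B" if "k < K" for k using that len A(10) nth_mem by metis
  have inj: "inj_on \<beta> {..<K}"
  proof (rule inj_onI)
    fix i j assume ij: "i \<in> {..<K}" "j \<in> {..<K}" "\<beta> i = \<beta> j"
    then have "Bord ! i = Bord ! j" using inj_onD[OF fs(2)] mem unfolding \<beta>_def by simp
    then show "i = j" using nth_eq_iff_index_eq[OF A(9)] ij len by simp
  qed
  have bnz: "\<forall>k<K. b k \<noteq> 0" using mem fs(3) unfolding b_def by simp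
  have sk: "\<sigma> k < K" if "k < K" for k using permutes_in_image[OF A(11), of k] that by simp
  have hB: "h_set B = h_list Bord"
    unfolding h_set_def h_list_def proof (intro ext)
    fix n show "(\<Sum>p\<in>B. fst p * snd p ^ n) = (\<Sum>p\<leftarrow>Bord. fst p * snd p ^ n)"
      using sum.distinct_set_conv_list[OF A(9), of "\<lambda>p. fst p * snd p ^ n"] A(10) by simp
  qed
  have hBn: "h_list Bord n = (\<Sum>k<K. b k * \<beta> k ^ n)" for n
    unfolding hlist_nth len b_def \<beta>_def ..
  have lenP: "length P = K" unfolding P_def perm_ord_def len by simp
  have nthP: "P ! k = Bord ! \<sigma> k" if "k < K" for k unfolding P_def perm_ord_def using that len by simp
  have hP: "h_list P = h_list Bord"
  proof
    fix n
    have "h_list P n = (\<Sum>k<K. b (\<sigma> k) * \<beta> (\<sigma> k) ^ n)"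
      unfolding hlist_nth lenP by (intro sum.cong refl) (simp add: nthP b_def \<beta>_def)
    also have "\<dots> = (\<Sum>k<K. b k * \<beta> k ^ n)"
      using sum.permute[OF A(11), of "\<lambda>k. b k * \<beta> k ^ n"] by (simp add: comp_def)
    finally show "h_list P n = h_list Bord n" using hBn by simp
  qed
  have tv: "trunc N a \<in> vecs N" for a unfolding trunc_def vecs_def by simp
  have obj0: "objective d N y x L = 0" if "h_list L = h_set B" for L
    unfolding objective_def A(6) that using A(8) tv by simp
  have o1: "objective d N y x Bord = 0" using obj0 hB by simp
  have o2: "objective d N y x P = 0" using obj0 hB hP by simp
  have o3: "objective d N y x (cvx l Bord P) > 0" if l: "0 < l" "l < 1" for l
  proof -
    let ?C = "cvx l Bord P"
    define c where "c k = of_real l * b k + of_real (1 - l) * b (\<sigma> k)" for k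
    have lenC: "length ?C = K" unfolding cvx_def using len lenP by simp
    have hC: "h_list ?C n = (\<Sum>k<K. c k * (of_real l * \<beta> k + of_real (1 - l) * \<beta> (\<sigma> k)) ^ n)" for n
      unfolding hlist_nth lenC by (intro sum.cong refl) (simp add: cvx_def len lenP nthP c_def b_def \<beta>_def)
    have ne: "trunc N y \<noteq> trunc N (conv (h_list ?C) x)"
    proof
      assume eqt: "trunc N y = trunc N (conv (h_list ?C) x)"
      have "\<forall>n<2*K. conv (h_list Bord) x n = conv (h_list ?C) x n"
      proof (intro allI impI)
        fix n :: nat assume "n < 2 * K"
        then have "enat n < N" using A(2) by (metis enat_ord_simps(2) order_less_le_trans)
        then show "conv (h_list Bord) x n = conv (h_list ?C) x n"
          using fun_cong[OF eqt, of n] unfolding trunc_def A(6) hB by simp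
      qed
      from deconv[OF A(5) this] have "\<forall>n<2*K. h_list Bord n = h_list ?C n" .
      then have "\<forall>n<2*K. (\<Sum>k<K. b k * \<beta> k ^ n) =
         (\<Sum>k<K. c k * (of_real l * \<beta> k + of_real (1 - l) * \<beta> (\<sigma> k)) ^ n)"
        unfolding hBn hC .
      from key[OF inj bnz A(11) A(12) l this] show False .
    qed
    have "objective d N y x ?C \<noteq> 0" unfolding objective_def using A(8) tv ne by simp
    moreover have "objective d N y x ?C \<ge> 0" unfolding objective_def using A(7) tv by simp
    ultimately show ?thesis by simp
  qed
  have nc: "\<not> (\<forall>U V (l::real). length U = K \<and> length V = K \<and> 0 \<le> l \<and> l \<le> 1 \<longrightarrow>
            objective d N y x (cvx l U V)
              \<le> l * objective d N y x U + (1 - l) * objective d N y x V)"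
  proof
    assume H: "\<forall>U V (l::real). length U = K \<and> length V = K \<and> 0 \<le> l \<and> l \<le> 1 \<longrightarrow>
            objective d N y x (cvx l U V)
              \<le> l * objective d N y x U + (1 - l) * objective d N y x V"
    have "objective d N y x (cvx (1/2) Bord P) \<le> 0"
      using H[rule_format, of Bord P "1/2"] len lenP o1 o2 by simp
    with o3[of "1/2"] show False by simp
  qed
  show ?thesis using o1 o2 o3 nc unfolding P_def by blast
qed

end
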